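(* Fix a dimension $D\geqslant 2$. There is a constant $C>0$ (depending only on $D$) such that for every integer $n\geqslant 2$, every real $s$, and every integer $k$ with $0\leqslant k<n$, $$\delta(n,s,k)\leqslant C\,\frac{s}{(k+1)^{1/D}},$$ i.e. $\delta(n,s,k)=O\big(s/(k+1)^{1/D}\big)$.
   Context: For a graph $G$ whose vertices are points in $\mathbb{R}^D$, each edge $(u,v)$ has weight equal to the Euclidean distance $d(u,v)$ (edges may cross or overlap), and $d_G(u,v)$ is the length of a shortest path in $G$ between $u$ and $v$. The dilation of $G$ is $\Delta(G)=\max_{u\neq v\in V(G)} d_G(u,v)/d(u,v)$. For a finite set $S$ of $n$ points and an integer $k\ge0$, $\Delta(S,k)$ is the minimum of $\Delta(G)$ over all graphs $G$ with vertex set exactly $S$ and exactly $n-1+k$ edges. The spread $s(S)$ of a finite point set $S$ with $|S|\ge2$ is the ratio of the largest to the smallest pairwise Euclidean distance in $S$. $\delta(n,s,k)=\sup\{\Delta(S,k): S\subset\mathbb{R}^D,\ |S|=n,\ s(S)\leqslant s\}$. *)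

theory Defs
  imports "HOL-Analysis.Analysis" "HOL-Library.Extended_Real"
begin

definition possible_edges :: "'a set \<Rightarrow> 'a set set" where
  "possible_edges S = {{x, y} | x y. x \<in> S \<and> y \<in> S \<and> x \<noteq> y}"

definition is_walk :: "'a set set \<Rightarrow> 'a list \<Rightarrow> bool" where
  "is_walk E xs \<longleftrightarrow> xs \<noteq> [] \<and> (\<forall>i. Suc i < length xs \<longrightarrow> {xs ! i, xs ! Suc i} \<in> E)"

definition walk_length :: "'a::metric_space list \<Rightarrow> real" where
  "walk_length xs = (\<Sum>i<length xs - 1. dist (xs ! i) (xs ! Suc i))"

(* Shortest-path distance d_G(u,v); equals \<infinity> if u,v are disconnected. *)
definition graph_dist :: "'a::metric_space set set \<Rightarrow> 'a \<Rightarrow> 'a \<Rightarrow> ereal" where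
  "graph_dist E u v = Inf {ereal (walk_length xs) | xs. is_walk E xs \<and> hd xs = u \<and> last xs = v}"

definition dilation :: "'a::metric_space set \<Rightarrow> 'a set set \<Rightarrow> ereal" where
  "dilation S E = Sup {graph_dist E u v / ereal (dist u v) | u v. u \<in> S \<and> v \<in> S \<and> u \<noteq> v}"

(* \<Delta>(S,k): least dilation of a graph on vertex set S with n-1+k edges, n = |S|.
   (Graphs with at most n-1+k edges: adding edges never increases dilation.) *)
definition Delta :: "'a::metric_space set \<Rightarrow> nat \<Rightarrow> ereal" where
  "Delta S k = Inf {dilation S E | E. E \<subseteq> possible_edges S \<and> card E \<le> card S - 1 + k}"

definition spread :: "'a::metric_space set \<Rightarrow> real" where
  "spread S = Sup {dist x y | x y. x \<in> S \<and> y \<in> S}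
              / Inf {dist x y | x y. x \<in> S \<and> y \<in> S \<and> x \<noteq> y}"

definition delta :: "'a::euclidean_space itself \<Rightarrow> nat \<Rightarrow> real \<Rightarrow> nat \<Rightarrow> ereal" where
  "delta _ n s k = Sup {Delta S k | S :: 'a set. finite S \<and> card S = n \<and> spread S \<le> s}"

end

theory Submission
  imports Defs
begin


lemma packing:
  fixes R :: "'a::euclidean_space set"
  assumes fin: "finite R" and r: "r > 0"
    and sep: "\<And>x y. x \<in> R \<Longrightarrow> y \<in> R \<Longrightarrow> x \<noteq> y \<Longrightarrow> r \<le> dist x y"
    and bd: "\<And>x. x \<in> R \<Longrightarrow> dist c x \<le> M" and M: "M \<ge> 0"
  shows "real (card R) * (r/2) ^ DIM('a) \<le> (M + r/2) ^ DIM('a)"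
proof -
  let ?v = "unit_ball_vol (real DIM('a))"
  have disj: "disjoint_family_on (\<lambda>x. ball x (r/2)) R"
    unfolding disjoint_family_on_def
  proof (intro ballI impI)
    fix x y assume "x \<in> R" "y \<in> R" "x \<noteq> y"
    then have "r \<le> dist x y" using sep by auto
    then show "ball x (r/2) \<inter> ball y (r/2) = {}"
      using dist_triangle[of x y] by (auto simp: ball_def dist_commute) (smt (verit) dist_commute dist_triangle)
  qed
  have "(\<Sum>x\<in>R. emeasure lborel (ball x (r/2))) = emeasure lborel (\<Union>x\<in>R. ball x (r/2))"
    by (rule sum_emeasure) (use fin disj in auto)
  also have "\<dots> \<le> emeasure lborel (ball c (M + r/2))"
  proof (rule emeasure_mono)
    show "(\<Union>x\<in>R. ball x (r/2)) \<subseteq> ball c (M + r/2)"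
    proof
      fix z assume "z \<in> (\<Union>x\<in>R. ball x (r/2))"
      then obtain x where "x \<in> R" "dist x z < r/2" by auto
      with bd[of x] dist_triangle[of c z x] have "dist c z < M + r/2" by linarith
      then show "z \<in> ball c (M + r/2)" by auto
    qed
  qed auto
  finally have "(\<Sum>x\<in>R. ennreal (?v * (r/2) ^ DIM('a))) \<le> ennreal (?v * (M + r/2) ^ DIM('a))"
    using r M emeasure_ball[of "M + r/2" c] by (simp add: emeasure_ball)
  then have "ennreal (real (card R) * (?v * (r/2) ^ DIM('a))) \<le> ennreal (?v * (M + r/2) ^ DIM('a))"
    by (simp add: ennreal_of_nat_eq_real_of_nat ennreal_mult')
  then have "real (card R) * (?v * (r/2) ^ DIM('a)) \<le> ?v * (M + r/2) ^ DIM('a)"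
  proof -
    have "?v * (M + r/2) ^ DIM('a) > 0" using r M by (intro mult_pos_pos) auto
    then show ?thesis using \<open>ennreal _ \<le> _\<close> by (subst (asm) ennreal_le_iff2) auto
  qed
  then have "?v * (real (card R) * (r/2) ^ DIM('a)) \<le> ?v * (M + r/2) ^ DIM('a)"
    by (simp add: algebra_simps)
  then show ?thesis by (simp add: mult_le_cancel_left_pos)
qed


definition reach :: "'a::metric_space set set \<Rightarrow> 'a \<Rightarrow> 'a \<Rightarrow> real \<Rightarrow> bool" where
  "reach E u v L \<longleftrightarrow> (\<exists>xs. is_walk E xs \<and> hd xs = u \<and> last xs = v \<and> walk_length xs \<le> L)"

lemma walk_length_single[simp]: "walk_length [x] = 0"
  by (simp add: walk_length_def)

lemma walk_length_Cons2[simp]: "walk_length (x # y # xs) = dist x y + walk_length (y # xs)"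
proof -
  have "length (x # y # xs) - 1 = Suc (length (y # xs) - 1)" by simp
  then show ?thesis unfolding walk_length_def by (simp only: sum.lessThan_Suc_shift) simp
qed

lemma is_walk_single[simp]: "is_walk E [x]"
  by (simp add: is_walk_def)

lemma is_walk_Cons2[simp]: "is_walk E (x # y # xs) \<longleftrightarrow> {x, y} \<in> E \<and> is_walk E (y # xs)"
proof
  assume h: "is_walk E (x # y # xs)"
  have "Suc 0 < length (x # y # xs)" by simp
  with h have "{(x # y # xs) ! 0, (x # y # xs) ! Suc 0} \<in> E" unfolding is_walk_def by blast
  then have "{x, y} \<in> E" by simp
  moreover have "is_walk E (y # xs)" unfolding is_walk_def
  proof (intro conjI allI impI)
    fix i assume "Suc i < length (y # xs)"
    then have "Suc (Suc i) < length (x # y # xs)" by simp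
    with h have "{(x # y # xs) ! Suc i, (x # y # xs) ! Suc (Suc i)} \<in> E" unfolding is_walk_def by blast
    then show "{(y # xs) ! i, (y # xs) ! Suc i} \<in> E" by simp
  qed simp
  ultimately show "{x, y} \<in> E \<and> is_walk E (y # xs)" by simp
next
  assume h: "{x, y} \<in> E \<and> is_walk E (y # xs)"
  show "is_walk E (x # y # xs)" unfolding is_walk_def
  proof (intro conjI allI impI)
    fix i assume i: "Suc i < length (x # y # xs)"
    show "{(x # y # xs) ! i, (x # y # xs) ! Suc i} \<in> E"
    proof (cases i)
      case 0 then show ?thesis using h by simp
    next
      case (Suc j)
      then have "Suc j < length (y # xs)" using i by simp
      then have "{(y # xs) ! j, (y # xs) ! Suc j} \<in> E" using h unfolding is_walk_def by blast
      then show ?thesis using Suc by simp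
    qed
  qed simp
qed

lemma reach_refl: "reach E u u 0"
  unfolding reach_def by (rule exI[of _ "[u]"]) simp

lemma reach_mono: "reach E u v a \<Longrightarrow> a \<le> b \<Longrightarrow> reach E u v b"
  unfolding reach_def by force

lemma reach_cons: "{u, w} \<in> E \<Longrightarrow> reach E w v a \<Longrightarrow> reach E u v (dist u w + a)"
  unfolding reach_def
proof (elim exE conjE)
  fix xs assume "{u, w} \<in> E" "is_walk E xs" "hd xs = w" "last xs = v" "walk_length xs \<le> a"
  then show "\<exists>xs. is_walk E xs \<and> hd xs = u \<and> last xs = v \<and> walk_length xs \<le> dist u w + a"
    by (intro exI[of _ "u # xs"]) (cases xs, simp add: is_walk_def, simp)
qed

lemma reach_edge: "{u, w} \<in> E \<Longrightarrow> reach E u w (dist u w)"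
  using reach_cons[of u w E w 0] reach_refl[of E w] by simp

lemma reach_trans_aux:
  "is_walk E xs \<Longrightarrow> hd xs = u \<Longrightarrow> reach E (last xs) v b \<Longrightarrow> reach E u v (walk_length xs + b)"
proof (induction xs arbitrary: u rule: induct_list012)
  case 1 then show ?case by (simp add: is_walk_def)
next
  case (2 x) then show ?case by simp
next
  case (3 x y zs)
  then have "reach E y v (walk_length (y # zs) + b)" by simp
  with 3 have "reach E u v (dist u y + (walk_length (y # zs) + b))" by (intro reach_cons) auto
  then show ?case using 3 by (simp add: algebra_simps)
qed

lemma reach_trans: "reach E u w a \<Longrightarrow> reach E w v b \<Longrightarrow> reach E u v (a + b)"
proof -
  assume "reach E u w a" "reach E w v b"
  then obtain xs where "is_walk E xs" "hd xs = u" "last xs = w" "walk_length xs \<le> a"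
    unfolding reach_def by blast
  with reach_trans_aux[of E xs u v b] \<open>reach E w v b\<close> have "reach E u v (walk_length xs + b)" by simp
  then show ?thesis by (rule reach_mono) (use \<open>walk_length xs \<le> a\<close> in simp)
qed

lemma reach_subset: "reach E u v a \<Longrightarrow> E \<subseteq> F \<Longrightarrow> reach F u v a"
  unfolding reach_def is_walk_def by blast

lemma graph_dist_le: "reach E u v a \<Longrightarrow> graph_dist E u v \<le> ereal a"
  unfolding reach_def graph_dist_def
  by (elim exE conjE, rule Inf_lower2) auto

lemma dilation_le:
  assumes "\<And>u v. u \<in> S \<Longrightarrow> v \<in> S \<Longrightarrow> u \<noteq> v \<Longrightarrow> reach E u v (B * dist u v)"
  shows "dilation S E \<le> ereal B"
  unfolding dilation_def
proof (rule Sup_least, clarify)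
  fix u v assume uv: "u \<in> S" "v \<in> S" "u \<noteq> v"
  then have d: "dist u v > 0" by simp
  have "graph_dist E u v / ereal (dist u v) \<le> ereal (B * dist u v) / ereal (dist u v)"
    using graph_dist_le[OF assms[OF uv]] d by (intro ereal_divide_right_mono) auto
  also have "\<dots> = ereal B" using d by simp
  finally show "graph_dist E u v / ereal (dist u v) \<le> ereal B" .
qed



lemma sphere_cover:
  obtains W :: "'a::euclidean_space set" where "finite W"
    "\<And>e. norm e = 1 \<Longrightarrow> \<exists>w\<in>W. norm (e - w) < 1/4"
proof -
  have cpt: "compact (sphere (0::'a) 1)" by simp
  have cov: "sphere (0::'a) 1 \<subseteq> (\<Union>w\<in>sphere 0 1. ball w (1/4))" by force
  obtain W where "W \<subseteq> sphere 0 1" "finite W" "sphere (0::'a) 1 \<subseteq> (\<Union>w\<in>W. ball w (1/4))"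
    using compactE_image[OF cpt, of "sphere 0 1" "\<lambda>w. ball w (1/4)"] cov by auto
  then show ?thesis using that[of W] by (auto simp: dist_norm norm_minus_commute subset_eq)
qed

lemma geo:
  fixes p q w :: "'a::real_inner"
  assumes p0: "p \<noteq> 0" and pq: "norm p \<le> norm q"
    and hp: "norm (p /\<^sub>R norm p - w) < 1/4" and hq: "norm (q /\<^sub>R norm q - w) < 1/4"
  shows "norm (p - q) \<le> norm q - norm p / 2"
proof -
  define a where "a = norm p"
  define b where "b = norm q"
  have a0: "a > 0" using p0 by (simp add: a_def)
  have b0: "b > 0" using a0 pq unfolding a_def b_def by linarith
  define e1 where "e1 = p /\<^sub>R a"
  define e2 where "e2 = q /\<^sub>R b"
  have n1: "norm e1 = 1" using a0 by (simp add: e1_def a_def)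
  have n2: "norm e2 = 1" using b0 by (simp add: e2_def b_def)
  have "norm (e1 - e2) \<le> norm (e1 - w) + norm (w - e2)" using norm_triangle_ineq[of "e1 - w" "w - e2"] by simp
  also have "\<dots> < 1/2" using hp hq by (simp add: e1_def e2_def a_def b_def norm_minus_commute)
  finally have d12: "norm (e1 - e2) < 1/2" .
  have "(norm (e1 - e2))^2 = e1 \<bullet> e1 - 2 * (e1 \<bullet> e2) + e2 \<bullet> e2"
    by (simp add: power2_norm_eq_inner inner_diff inner_commute)
  also have "\<dots> = 2 - 2 * (e1 \<bullet> e2)" using n1 n2 by (simp add: power2_norm_eq_inner[symmetric])
  finally have sq: "(norm (e1 - e2))^2 = 2 - 2 * (e1 \<bullet> e2)" .
  have "(norm (e1 - e2))^2 < (1/2)^2" by (rule power_strict_mono) (use d12 in auto)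
  then have "2 - 2 * (e1 \<bullet> e2) < 1/4" using sq by (simp add: power2_eq_square)
  then have e12: "e1 \<bullet> e2 > 7/8" by simp
  have pq_in: "p \<bullet> q = a * b * (e1 \<bullet> e2)"
    using a0 b0 by (simp add: e1_def e2_def field_simps)
  have "(norm (p - q))^2 = a^2 + b^2 - 2 * (p \<bullet> q)"
    by (simp add: power2_norm_eq_inner inner_diff inner_commute a_def b_def)
  also have "\<dots> \<le> a^2 + b^2 - 7/4 * (a * b)"
    using pq_in e12 a0 b0 mult_strict_left_mono[of "7/8" "e1 \<bullet> e2" "a*b"] by simp
  also have "\<dots> \<le> (b - a/2)^2"
  proof -
    have "a * a \<le> a * b" using pq a0 unfolding a_def b_def by (intro mult_left_mono) auto
    then show ?thesis by (simp add: power2_eq_square algebra_simps)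
  qed
  finally have "(norm (p - q))^2 \<le> (b - a/2)^2" .
  moreover have "b - a/2 \<ge> 0" using pq a0 unfolding a_def b_def by linarith
  ultimately show ?thesis using power2_le_imp_le by (simp add: a_def b_def)
qed



lemma theta_graph:
  fixes R :: "'a::euclidean_space set" and W :: "'a set"
  assumes finR: "finite R" and finW: "finite W"
    and cov: "\<And>e. norm e = 1 \<Longrightarrow> \<exists>w\<in>W. norm (e - w) < 1/4"
  shows "\<exists>T. T \<subseteq> possible_edges R \<and> card T \<le> card R * card W \<and>
              (\<forall>u\<in>R. \<forall>v\<in>R. reach T u v (2 * dist u v))"
proof -
  define cone where "cone u w = {v \<in> R. v \<noteq> u \<and> norm ((v - u) /\<^sub>R norm (v - u) - w) < 1/4}" for u w
  define nn where "nn u w = (SOME z. z \<in> cone u w \<and> (\<forall>y\<in>cone u w. dist u z \<le> dist u y))" for u w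
  have nn: "nn u w \<in> cone u w \<and> (\<forall>y\<in>cone u w. dist u (nn u w) \<le> dist u y)" if "cone u w \<noteq> {}" for u w
  proof -
    have fin: "finite (cone u w)" using finR by (simp add: cone_def)
    have "Min (dist u ` cone u w) \<in> dist u ` cone u w" using fin that by (intro Min_in) auto
    then obtain z where z: "z \<in> cone u w" "dist u z = Min (dist u ` cone u w)" by auto
    then have zm: "\<forall>y\<in>cone u w. dist u z \<le> dist u y" using fin by auto
    have "z \<in> cone u w \<and> (\<forall>y\<in>cone u w. dist u z \<le> dist u y)" using z(1) zm by blast
    then show ?thesis unfolding nn_def by (rule someI[where x = z])
  qed
  define P where "P = {(u, w). u \<in> R \<and> w \<in> W \<and> cone u w \<noteq> {}}"
  define T where "T = (\<lambda>(u, w). {u, nn u w}) ` P"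
  have "T \<subseteq> possible_edges R"
  proof
    fix e assume "e \<in> T"
    then obtain u w where "u \<in> R" "cone u w \<noteq> {}" "e = {u, nn u w}" by (auto simp: T_def P_def)
    with nn[of u w] show "e \<in> possible_edges R" by (auto simp: possible_edges_def cone_def)
  qed
  moreover have "card T \<le> card R * card W"
  proof -
    have "card T \<le> card P" unfolding T_def by (rule card_image_le) (use finR finW in \<open>auto simp: P_def intro: finite_subset[of _ "R \<times> W"]\<close>)
    also have "card P \<le> card (R \<times> W)" by (rule card_mono) (use finR finW in \<open>auto simp: P_def\<close>)
    finally show ?thesis by (simp add: card_cartesian_product)
  qed
  moreover have "reach T u v (2 * dist u v)" if "u \<in> R" "v \<in> R" for u v
    using that
  proof (induction "card {p \<in> R \<times> R. dist (fst p) (snd p) < dist u v}" arbitrary: u v rule: less_induct)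
    case less
    show ?case
    proof (cases "u = v")
      case True then show ?thesis using reach_refl[of T u] by simp
    next
      case False
      define e where "e = (v - u) /\<^sub>R norm (v - u)"
      have "norm e = 1" using False by (simp add: e_def)
      then obtain w where w: "w \<in> W" "norm (e - w) < 1/4" using cov by blast
      have vc: "v \<in> cone u w" using w less.prems False by (simp add: cone_def e_def)
      then have ne: "cone u w \<noteq> {}" by auto
      define z where "z = nn u w"
      have zc: "z \<in> cone u w" and zmin: "dist u z \<le> dist u v" using nn[OF ne] vc by (auto simp: z_def)
      have zR: "z \<in> R" and zu: "z \<noteq> u" and hz: "norm ((z - u) /\<^sub>R norm (z - u) - w) < 1/4"
        using zc by (auto simp: cone_def)
      have edge: "{u, z} \<in> T" using less.prems(1) w(1) ne unfolding T_def P_def z_def by force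
      have "norm ((z - u) - (v - u)) \<le> norm (v - u) - norm (z - u) / 2"
        by (rule geo[OF _ _ hz]) (use zu zmin vc in \<open>auto simp: dist_norm norm_minus_commute cone_def\<close>)
      then have dzv: "dist z v \<le> dist u v - dist u z / 2"
        by (simp add: dist_norm norm_minus_commute)
      have duz: "dist u z > 0" using zu by simp
      have dlt: "dist z v < dist u v" using dzv duz by linarith
      let ?A = "\<lambda>a b. {p \<in> R \<times> R. dist (fst p) (snd p) < dist a b}"
      have "?A z v \<subset> ?A u v"
      proof
        show "?A z v \<subseteq> ?A u v" using dlt by auto
        show "?A z v \<noteq> ?A u v"
        proof
          assume "?A z v = ?A u v"
          moreover have "(z, v) \<in> ?A u v" using dlt zR less.prems by auto
          ultimately have "(z, v) \<in> ?A z v" by (simp only:)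
          then show False by simp
        qed
      qed
      then have "card (?A z v) < card (?A u v)"
        by (intro psubset_card_mono) (use finR in auto)
      then have "reach T z v (2 * dist z v)" using less.hyps zR less.prems by blast
      from reach_cons[OF edge this] have "reach T u v (dist u z + 2 * dist z v)" .
      then show ?thesis by (rule reach_mono) (use dzv in simp)
    qed
  qed
  ultimately show ?thesis by blast
qed



lemma assemble:
  fixes S R :: "'a::metric_space set"
  assumes finS: "finite S" and RS: "R \<subseteq> S" and Rne: "R \<noteq> {}"
    and TR: "T \<subseteq> possible_edges R" and Treach: "\<And>u v. u \<in> R \<Longrightarrow> v \<in> R \<Longrightarrow> reach T u v (2 * dist u v)"
    and r: "r \<ge> 0" and cov: "\<And>x. x \<in> S \<Longrightarrow> \<exists>y\<in>R. dist x y \<le> r"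
  shows "\<exists>E. E \<subseteq> possible_edges S \<and> card E \<le> card T + (card S - card R) \<and>
             (\<forall>u\<in>S. \<forall>v\<in>S. reach E u v (2 * dist u v + 6 * r))"
proof -
  define \<rho> where "\<rho> x = (if x \<in> R then x else SOME y. y \<in> R \<and> dist x y \<le> r)" for x
  have \<rho>: "\<rho> x \<in> R \<and> dist x (\<rho> x) \<le> r" if "x \<in> S" for x
  proof (cases "x \<in> R")
    case True then show ?thesis using r by (simp add: \<rho>_def)
  next
    case False
    from cov[OF that] obtain y where "y \<in> R \<and> dist x y \<le> r" by blast
    then have "(SOME y. y \<in> R \<and> dist x y \<le> r) \<in> R \<and> dist x (SOME y. y \<in> R \<and> dist x y \<le> r) \<le> r"
      by (rule someI)
    then show ?thesis using False by (simp add: \<rho>_def)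
  qed
  define E where "E = T \<union> (\<lambda>x. {x, \<rho> x}) ` (S - R)"
  have PRS: "possible_edges R \<subseteq> possible_edges S" using RS unfolding possible_edges_def by blast
  have "E \<subseteq> possible_edges S"
  proof
    fix e assume "e \<in> E"
    then consider "e \<in> T" | x where "x \<in> S" "x \<notin> R" "e = {x, \<rho> x}" by (auto simp: E_def)
    then show "e \<in> possible_edges S"
    proof cases
      case 1 then show ?thesis using TR PRS by blast
    next
      case 2
      then have "\<rho> x \<in> R" using \<rho> by blast
      then have "\<rho> x \<in> S" "\<rho> x \<noteq> x" using 2 RS by auto
      then show ?thesis using 2 unfolding possible_edges_def by blast
    qed
  qed
  moreover have "card E \<le> card T + (card S - card R)"
  proof -
    have "card E \<le> card T + card ((\<lambda>x. {x, \<rho> x}) ` (S - R))"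
      unfolding E_def by (rule card_Un_le)
    also have "card ((\<lambda>x. {x, \<rho> x}) ` (S - R)) \<le> card (S - R)" by (rule card_image_le) (use finS in auto)
    also have "card (S - R) = card S - card R" using RS finS by (simp add: card_Diff_subset finite_subset)
    finally show ?thesis by simp
  qed
  moreover have "reach E u v (2 * dist u v + 6 * r)" if u: "u \<in> S" and v: "v \<in> S" for u v
  proof -
    have up: "reach E x (\<rho> x) r \<and> reach E (\<rho> x) x r" if "x \<in> S" for x
    proof (cases "x \<in> R")
      case True then show ?thesis using reach_refl[of E x] r by (auto simp: \<rho>_def intro: reach_mono)
    next
      case False
      then have e: "{x, \<rho> x} \<in> E" using that unfolding E_def by auto
      then have e': "{\<rho> x, x} \<in> E" by (simp add: insert_commute)
      show ?thesis using reach_edge[OF e] reach_edge[OF e'] \<rho>[OF that]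
        by (auto intro: reach_mono simp: dist_commute)
    qed
    have "reach T (\<rho> u) (\<rho> v) (2 * dist (\<rho> u) (\<rho> v))" using \<rho> u v Treach by blast
    then have m: "reach E (\<rho> u) (\<rho> v) (2 * dist (\<rho> u) (\<rho> v))" by (rule reach_subset) (simp add: E_def)
    have "dist (\<rho> u) (\<rho> v) \<le> dist (\<rho> u) u + dist u v + dist v (\<rho> v)"
      using dist_triangle[of "\<rho> u" "\<rho> v" u] dist_triangle[of u "\<rho> v" v] by linarith
    also have "\<dots> \<le> dist u v + 2 * r" using \<rho>[OF u] \<rho>[OF v] by (simp add: dist_commute)
    finally have dd: "dist (\<rho> u) (\<rho> v) \<le> dist u v + 2 * r" .
    have "reach E u v (r + 2 * dist (\<rho> u) (\<rho> v) + r)"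
      using reach_trans[OF reach_trans[OF conjunct1[OF up[OF u]] m] conjunct2[OF up[OF v]]] .
    then show ?thesis by (rule reach_mono) (use dd in simp)
  qed
  ultimately show ?thesis by blast
qed

lemma spread_facts:
  fixes S :: "'a::metric_space set"
  assumes fin: "finite S" and c2: "card S \<ge> 2"
  obtains m M where "m > 0" "spread S = M / m" "\<And>x y. x \<in> S \<Longrightarrow> y \<in> S \<Longrightarrow> dist x y \<le> M"
    "\<And>x y. x \<in> S \<Longrightarrow> y \<in> S \<Longrightarrow> x \<noteq> y \<Longrightarrow> m \<le> dist x y" "m \<le> M"
proof -
  define A where "A = {dist x y | x y. x \<in> S \<and> y \<in> S}"
  define B where "B = {dist x y | x y. x \<in> S \<and> y \<in> S \<and> x \<noteq> y}"
  have finA: "finite A" unfolding A_def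
    by (rule finite_subset[of _ "(\<lambda>(x,y). dist x y) ` (S \<times> S)"]) (use fin in auto)
  have BA: "B \<subseteq> A" unfolding A_def B_def by blast
  have finB: "finite B" using finA BA finite_subset by blast
  obtain a b where ab: "a \<in> S" "b \<in> S" "a \<noteq> b"
    using c2 by (metis One_nat_def card.empty card_1_singletonE card_le_Suc0_iff_eq fin not_less_eq_eq numeral_2_eq_2 zero_le)
  have Bne: "B \<noteq> {}" using ab unfolding B_def by blast
  have "Inf B \<in> B" using finB Bne by (simp add: cInf_eq_Min)
  then have m0: "Inf B > 0" unfolding B_def by auto
  have mle: "\<And>x y. x \<in> S \<Longrightarrow> y \<in> S \<Longrightarrow> x \<noteq> y \<Longrightarrow> Inf B \<le> dist x y"
    using finB by (intro cInf_lower) (auto simp: B_def)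
  have Mge: "\<And>x y. x \<in> S \<Longrightarrow> y \<in> S \<Longrightarrow> dist x y \<le> Sup A"
    using finA by (intro cSup_upper) (auto simp: A_def)
  have "Inf B \<le> Sup A" using mle[OF ab] Mge[OF ab(1,2)] by linarith
  then show ?thesis using that[of "Inf B" "Sup A"] m0 mle Mge unfolding spread_def A_def B_def by blast
qed

lemma powr_le_of_le_pow:
  assumes "0 \<le> x" "0 \<le> y" "x \<le> y ^ D" "D > 0"
  shows "x powr (1 / real D) \<le> y"
proof -
  have "x powr (1 / real D) \<le> (y ^ D) powr (1 / real D)" by (rule powr_mono2) (use assms in auto)
  also have "(y ^ D) powr (1 / real D) = y"
  proof (cases "y = 0")
    case True then show ?thesis using assms by simp
  next
    case False
    then have "y > 0" using assms by simp
    then have "(y ^ D) powr (1 / real D) = (y powr real D) powr (1 / real D)" by (simp add: powr_realpow)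
    also have "\<dots> = y" using \<open>y > 0\<close> assms by (simp add: powr_powr)
    finally show ?thesis .
  qed
  finally show ?thesis .
qed

lemma powr_root_pow:
  assumes "0 < x" "D > 0"
  shows "(x powr (1 / real D)) ^ D = x"
proof -
  have "(x powr (1 / real D)) ^ D = (x powr (1 / real D)) powr real D" using assms by (simp add: powr_realpow)
  also have "\<dots> = x" using assms by (simp add: powr_powr)
  finally show ?thesis .
qed



lemma dil_from_reach:
  assumes R: "\<And>u v. u \<in> S \<Longrightarrow> v \<in> S \<Longrightarrow> reach E u v (2 * dist u v + 6 * r)"
    and r: "r \<ge> 0" and m: "m > 0" and sep: "\<And>x y. x \<in> S \<Longrightarrow> y \<in> S \<Longrightarrow> x \<noteq> y \<Longrightarrow> m \<le> dist x y"
  shows "dilation S E \<le> ereal (2 + 6 * r / m)"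
proof (rule dilation_le)
  fix u v assume uv: "u \<in> S" "v \<in> S" "u \<noteq> v"
  have d: "m \<le> dist u v" using sep uv by blast
  have "6 * r = (6 * r / m) * m" using m by simp
  also have "\<dots> \<le> (6 * r / m) * dist u v" using d r m by (intro mult_left_mono) auto
  finally have "2 * dist u v + 6 * r \<le> (2 + 6 * r / m) * dist u v" by (simp add: algebra_simps)
  then show "reach E u v ((2 + 6 * r / m) * dist u v)" using R[OF uv(1,2)] reach_mono by blast
qed

lemma pow_powr_root:
  assumes "0 \<le> y" "D > 0"
  shows "(y ^ D) powr (1 / real D) = y"
proof (cases "y = 0")
  case True then show ?thesis using assms by simp
next
  case False
  then have "y > 0" using assms by simp
  then have "(y ^ D) powr (1 / real D) = (y powr real D) powr (1 / real D)" by (simp add: powr_realpow)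
  also have "\<dots> = y" using \<open>y > 0\<close> assms by (simp add: powr_powr)
  finally show ?thesis .
qed

theorem theorem6:
  assumes "DIM('a::euclidean_space) \<ge> 2"
  shows "\<exists>C>0. \<forall>n s k. n \<ge> 2 \<longrightarrow> k < n \<longrightarrow>
           delta TYPE('a) n s k \<le> ereal (C * s / (real k + 1) powr (1 / real DIM('a)))"
proof -
  obtain W :: "'a set" where finW: "finite W" and covW: "\<And>e. norm e = 1 \<Longrightarrow> \<exists>w\<in>W. norm (e - w) < 1/4"
    using sphere_cover[where 'a='a] by blast
  define D where "D = DIM('a)"
  have D0: "D > 0" by (simp add: D_def)
  define c where "c = card W"
  have c0: "c > 0"
  proof -
    obtain b :: 'a where "b \<in> Basis" using nonempty_Basis by blast
    then have "norm b = 1" by simp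
    then obtain w where "w \<in> W" using covW by blast
    then show ?thesis using finW by (auto simp: c_def card_gt_0_iff)
  qed
  define A :: nat where "A = 2 ^ D * c"
  define C where "C = 8 * real A powr (1 / real D) + 6 + 24 * (2 * real c) powr (1 / real D)"
  have pA: "0 \<le> real A powr (1 / real D)" and pc: "0 \<le> (2 * real c) powr (1 / real D)"
    by (simp_all add: powr_ge_zero)
  have C0: "C > 0" unfolding C_def using pA pc by linarith
  show ?thesis
  proof (intro exI[of _ C] conjI allI impI C0)
    fix n :: nat and s :: real and k :: nat assume n2: "2 \<le> n" and kn: "k < n"
    define q where "q = (real k + 1) powr (1 / real D)"
    have q0: "q > 0" unfolding q_def by simp
    have key: "Delta S k \<le> ereal (C * s / q)"
      if finS: "finite S" and cardS: "card S = n" and spS: "spread S \<le> s" for S :: "'a set"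
    proof -
      obtain m M where m0: "m > 0" and spM: "spread S = M / m"
        and Mub: "\<And>x y. x \<in> S \<Longrightarrow> y \<in> S \<Longrightarrow> dist x y \<le> M"
        and mlb: "\<And>x y. x \<in> S \<Longrightarrow> y \<in> S \<Longrightarrow> x \<noteq> y \<Longrightarrow> m \<le> dist x y" and mM: "m \<le> M"
        using spread_facts[OF finS] cardS n2 by metis
      have sM: "M / m \<le> s" using spS spM by simp
      have Mm1: "1 \<le> M / m" using mM m0 by simp
      have s1: "1 \<le> s" using sM Mm1 by linarith
      have M0: "M > 0" using mM m0 by linarith
      have Ms: "M \<le> s * m" using sM m0 by (simp add: pos_divide_le_eq)
      obtain x0 where x0: "x0 \<in> S" using n2 cardS by (metis card.empty ex_in_conv not_numeral_le_zero)
      have "\<exists>E. E \<subseteq> possible_edges S \<and> card E \<le> card S - 1 + k \<and> dilation S E \<le> ereal (C * s / q)"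
      proof (cases "k < A")
        case True
        have "\<exists>E. E \<subseteq> possible_edges S \<and> card E \<le> card ({}::'a set set) + (card S - card {x0}) \<and>
             (\<forall>u\<in>S. \<forall>v\<in>S. reach E u v (2 * dist u v + 6 * M))"
          by (rule assemble[OF finS, of "{x0}" "{}" M])
             (use x0 Mub M0 reach_refl in \<open>auto simp: possible_edges_def intro: less_imp_le\<close>)
        then obtain E where E: "E \<subseteq> possible_edges S" "card E \<le> card S - 1"
          "\<And>u v. u \<in> S \<Longrightarrow> v \<in> S \<Longrightarrow> reach E u v (2 * dist u v + 6 * M)" by auto
        have dil: "dilation S E \<le> ereal (2 + 6 * M / m)"
          by (rule dil_from_reach[OF E(3) _ m0 mlb]) (use M0 in auto)
        have B: "2 + 6 * M / m \<le> 8 * s" using Mm1 sM by simp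
        have "real k + 1 \<le> real A" using True by simp
        then have qA: "q \<le> real A powr (1 / real D)" unfolding q_def by (intro powr_mono2) auto
        have "(2 + 6 * M / m) * q \<le> 8 * s * q" using B q0 by (intro mult_right_mono) auto
        also have "\<dots> \<le> 8 * s * real A powr (1 / real D)" using qA s1 by (intro mult_left_mono) auto
        also have "\<dots> \<le> C * s" unfolding C_def using s1
          by (simp add: algebra_simps)
        finally have "2 + 6 * M / m \<le> C * s / q" using q0 by (simp add: pos_le_divide_eq)
        then have "dilation S E \<le> ereal (C * s / q)" using dil by (meson ereal_less_eq(3) order.trans)
        then show ?thesis using E by auto
      next
        case False
        then have Ak: "A \<le> k" by simp
        have A1: "1 \<le> A" unfolding A_def using c0 by simp
        have kpos: "real k > 0" using Ak A1 by simp
        have c0r: "real c > 0" using c0 by simp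
        have "real (2 ^ D * c) \<le> real k" using Ak unfolding A_def by linarith
        then have "2 ^ D * real c \<le> real k" by simp
        then have kc: "2 ^ D \<le> real k / real c" using c0r by (simp add: pos_le_divide_eq)
        define K where "K = (real k / real c) powr (1 / real D)"
        have "(2::real) = (2 ^ D) powr (1 / real D)" using pow_powr_root[of 2 D] D0 by simp
        also have "\<dots> \<le> K" unfolding K_def using kc by (intro powr_mono2) auto
        finally have K2: "2 \<le> K" .
        have KD: "K ^ D = real k / real c" unfolding K_def using kpos c0r D0 by (intro powr_root_pow) auto
        define r where "r = 4 * M / K"
        have r0: "r > 0" using M0 K2 by (simp add: r_def)
        define F where "F = {R. R \<subseteq> S \<and> R \<noteq> {} \<and> (\<forall>x\<in>R. \<forall>y\<in>R. x \<noteq> y \<longrightarrow> r \<le> dist x y)}"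
        have finF: "finite F" by (rule finite_subset[of _ "Pow S"]) (use finS in \<open>auto simp: F_def\<close>)
        have x0F: "{x0} \<in> F" using x0 by (simp add: F_def)
        have "Max (card ` F) \<in> card ` F" using finF x0F by (intro Max_in) auto
        then obtain R where RF: "R \<in> F" and cR: "card R = Max (card ` F)" by auto
        have Rmax: "card R' \<le> card R" if "R' \<in> F" for R' using finF that cR by simp
        have RS: "R \<subseteq> S" and Rne: "R \<noteq> {}" and Rsep: "\<And>x y. x \<in> R \<Longrightarrow> y \<in> R \<Longrightarrow> x \<noteq> y \<Longrightarrow> r \<le> dist x y"
          using RF by (auto simp: F_def)
        have finR: "finite R" using RS finS finite_subset by blast
        have cardR1: "1 \<le> card R" using finR Rne by (simp add: Suc_le_eq card_gt_0_iff)
        have cardRS: "card R \<le> card S" using RS finS by (rule card_mono[rotated])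
        have covR: "\<exists>y\<in>R. dist x y \<le> r" if xS: "x \<in> S" for x
        proof (rule ccontr)
          assume "\<not> (\<exists>y\<in>R. dist x y \<le> r)"
          then have far: "\<And>y. y \<in> R \<Longrightarrow> r < dist x y" by force
          have xR: "x \<notin> R" using far[of x] r0 by auto
          have "insert x R \<in> F" unfolding F_def using RS xS Rsep far
            by (auto simp: dist_commute intro: less_imp_le)
          then have "card (insert x R) \<le> card R" by (rule Rmax)
          then show False using xR finR by simp
        qed
        have pk: "real (card R) * (r/2) ^ DIM('a) \<le> (M + r/2) ^ DIM('a)"
          by (rule packing[OF finR r0 Rsep, of x0 M]) (use RS Mub x0 M0 in auto)
        have eqM: "M + r/2 = (K/2 + 1) * (r/2)" using K2 by (simp add: r_def field_simps)
        have r2: "(r/2) ^ D > 0" using r0 by simp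
        have "real (card R) * (r/2) ^ D \<le> (K/2 + 1) ^ D * (r/2) ^ D"
          using pk unfolding eqM D_def by (simp only: power_mult_distrib)
        then have "real (card R) \<le> (K/2 + 1) ^ D" using r2 by simp
        also have "\<dots> \<le> K ^ D" using K2 by (intro power_mono) auto
        finally have "real (card R) \<le> real k / real c" using KD by simp
        then have "real (card R) * real c \<le> real k" using c0r by (simp add: pos_le_divide_eq)
        then have cRk: "card R * c \<le> k" by (metis of_nat_le_iff of_nat_mult)
        obtain T where T: "T \<subseteq> possible_edges R" "card T \<le> card R * card W"
          "\<forall>u\<in>R. \<forall>v\<in>R. reach T u v (2 * dist u v)"
          using theta_graph[OF finR finW covW] by blast
        obtain E where E: "E \<subseteq> possible_edges S" "card E \<le> card T + (card S - card R)"
          "\<forall>u\<in>S. \<forall>v\<in>S. reach E u v (2 * dist u v + 6 * r)"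
          using assemble[OF finS RS Rne T(1) _ _ covR] T(3) r0 by auto
        have cardE: "card E \<le> card S - 1 + k"
          using E(2) T(2) cRk cardR1 cardRS unfolding c_def by linarith
        have dil: "dilation S E \<le> ereal (2 + 6 * r / m)"
          by (rule dil_from_reach[OF _ _ m0 mlb]) (use E(3) r0 in auto)
        have pkS: "real (card S) * (m/2) ^ DIM('a) \<le> (M + m/2) ^ DIM('a)"
          by (rule packing[OF finS m0 mlb, of x0 M]) (use Mub x0 M0 in auto)
        have "M + m/2 \<le> (3 * s) * (m/2)" 
        proof -
          have "m * 1 \<le> m * s" using s1 m0 by (intro mult_left_mono) auto
          then show ?thesis using Ms by (simp add: algebra_simps)
        qed
        then have pw: "(M + m/2) ^ D \<le> ((3 * s) * (m/2)) ^ D" using M0 m0 by (intro power_mono) auto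
        have "real (card S) * (m/2) ^ D \<le> (3 * s) ^ D * (m/2) ^ D"
          using order.trans[OF pkS[folded D_def] pw] by (simp only: power_mult_distrib)
        then have "real (card S) \<le> (3 * s) ^ D" using m0 by simp
        then have "real k + 1 \<le> (3 * s) ^ D" using kn cardS by simp
        then have q3: "q \<le> 3 * s" unfolding q_def by (intro powr_le_of_le_pow) (use s1 D0 in auto)
        have "real k + 1 \<le> (2 * real c) * (real k / real c)" using c0r kpos Ak A1 by (simp add: field_simps)
        then have "q \<le> ((2 * real c) * (real k / real c)) powr (1 / real D)"
          unfolding q_def by (intro powr_mono2) auto
        also have "\<dots> = (2 * real c) powr (1 / real D) * K" unfolding K_def
          using c0r kpos by (subst powr_mult) auto
        finally have qK: "q / K \<le> (2 * real c) powr (1 / real D)" using K2 by (simp add: pos_divide_le_eq)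
        have "6 * r / m = 24 * (M / m) / K" by (simp add: r_def field_simps)
        also have "\<dots> \<le> 24 * s / K" using sM K2 by (intro divide_right_mono) auto
        finally have B: "2 + 6 * r / m \<le> 2 + 24 * s / K" by simp
        have "(2 + 6 * r / m) * q \<le> (2 + 24 * s / K) * q" using B q0 by (intro mult_right_mono) auto
        also have "\<dots> = 2 * q + 24 * s * (q / K)" by (simp add: field_simps)
        also have "\<dots> \<le> 6 * s + 24 * s * (2 * real c) powr (1 / real D)"
          using q3 qK s1 by (smt (verit) mult_left_mono)
        also have "\<dots> \<le> C * s" unfolding C_def using s1 pA by (simp add: algebra_simps)
        finally have "2 + 6 * r / m \<le> C * s / q" using q0 by (simp add: pos_le_divide_eq)
        then have "dilation S E \<le> ereal (C * s / q)" using dil by (meson ereal_less_eq(3) order.trans)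
        then show ?thesis using E(1) cardE by auto
      qed
      then obtain E where "E \<subseteq> possible_edges S" "card E \<le> card S - 1 + k" "dilation S E \<le> ereal (C * s / q)"
        by blast
      then show ?thesis unfolding Delta_def by (intro Inf_lower2[of "dilation S E"]) auto
    qed
    show "delta TYPE('a) n s k \<le> ereal (C * s / (real k + 1) powr (1 / real DIM('a)))"
      unfolding delta_def q_def[unfolded D_def, symmetric] by (rule Sup_least) (auto intro: key)
  qed
qed

end
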